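(* Let $1\le p\le 2$ and let $\{f_n\}$ be a $K$-unconditional basic sequence in $L^p(\mathbb R)$ with $C=\sup_n\|f_n\|_p<\infty$. Suppose there are measurable sets $E_n\subset\mathbb R$ and constants $M$ and $\delta>0$ such that $\sum_n\mathbf 1_{E_n}\le M$ a.e. and $\|f_n|_{E_n}\|_p\ge\delta$ for every $n$. Then $\{f_n\}$ is equivalent to the standard unit vector basis of $\ell^p$: $$\Big\|\sum_na_nf_n\Big\|_p\asymp\Big(\sum_n|a_n|^p\Big)^{1/p}$$ for all finitely supported scalars $\{a_n\}$, where the implied constants depend only on $p,K,C,M,\delta$.
   Context: A sequence $\{f_n\}$ in a Banach space is a $K$-unconditional basic sequence if it is a basis of its closed span and $\|\sum_n\theta_na_nf_n\|\le K\|\sum_na_nf_n\|$ for all finitely supported scalars $\{a_n\}$ and all scalars $|\theta_n|\le1$. *)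

theory Defs
  imports "HOL-Analysis.Analysis"
begin

definition memLp :: "real \<Rightarrow> (real \<Rightarrow> complex) \<Rightarrow> bool" where
  "memLp p g \<longleftrightarrow> g \<in> borel_measurable lebesgue \<and>
     integrable lebesgue (\<lambda>x. cmod (g x) powr p)"

definition Lp_norm :: "real \<Rightarrow> (real \<Rightarrow> complex) \<Rightarrow> real" where
  "Lp_norm p g = (\<integral>x. cmod (g x) powr p \<partial>lebesgue) powr (1 / p)"

definition in_closed_span :: "real \<Rightarrow> (nat \<Rightarrow> real \<Rightarrow> complex) \<Rightarrow> (real \<Rightarrow> complex) \<Rightarrow> bool" where
  "in_closed_span p f g \<longleftrightarrow> memLp p g \<and>
     (\<forall>\<epsilon>>0. \<exists>N a. Lp_norm p (\<lambda>x. g x - (\<Sum>n<N. a n * f n x)) < \<epsilon>)"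

definition basic_seq :: "real \<Rightarrow> (nat \<Rightarrow> real \<Rightarrow> complex) \<Rightarrow> bool" where
  "basic_seq p f \<longleftrightarrow> (\<forall>n. memLp p (f n)) \<and>
     (\<forall>g. in_closed_span p f g \<longrightarrow>
        (\<exists>!a::nat \<Rightarrow> complex.
            (\<lambda>N. Lp_norm p (\<lambda>x. g x - (\<Sum>n<N. a n * f n x))) \<longlonglongrightarrow> 0))"

definition K_unconditional_basic :: "real \<Rightarrow> real \<Rightarrow> (nat \<Rightarrow> real \<Rightarrow> complex) \<Rightarrow> bool" where
  "K_unconditional_basic p K f \<longleftrightarrow> basic_seq p f \<and>
     (\<forall>(a::nat \<Rightarrow> complex) (\<theta>::nat \<Rightarrow> complex) N. (\<forall>n. cmod (\<theta> n) \<le> 1) \<longrightarrow>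
        Lp_norm p (\<lambda>x. \<Sum>n<N. \<theta> n * a n * f n x)
          \<le> K * Lp_norm p (\<lambda>x. \<Sum>n<N. a n * f n x))"

end

theory Submission
  imports Defs
begin


lemma conv_half:
  fixes p x y :: real
  assumes "1 \<le> p" "0 \<le> x" "0 \<le> y"
  shows "((x+y)/2) powr p \<le> (x powr p + y powr p)/2"
proof -
  have h2: "2 \<le> (2::real) powr p"
    using powr_mono[of 1 p 2] assms by simp
  have half: "(z/2) powr p \<le> z powr p / 2" if "0 \<le> z" for z :: real
  proof -
    have "(z/2) powr p = z powr p / 2 powr p" by (simp add: powr_divide)
    also have "\<dots> \<le> z powr p / 2"
      using h2 by (intro divide_left_mono) auto
    finally show ?thesis .
  qed
  show ?thesis
  proof (cases "x = 0 \<or> y = 0")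
    case True
    then show ?thesis using half assms by auto
  next
    case False
    then have "x > 0" "y > 0" using assms by auto
    have "(\<lambda>x. x powr p) ((1 - 1/2) *\<^sub>R x + (1/2) *\<^sub>R y) \<le> (1 - 1/2) * x powr p + (1/2) * y powr p"
      by (rule convex_onD[OF powr_convex[OF assms(1)]]) (use \<open>x>0\<close> \<open>y>0\<close> in auto)
    then show ?thesis by (simp add: field_simps)
  qed
qed

lemma subadd_powr:
  fixes q a b :: real
  assumes "0 < q" "q \<le> 1" "0 \<le> a" "0 \<le> b"
  shows "(a+b) powr q \<le> a powr q + b powr q"
proof (cases "a + b = 0")
  case True then show ?thesis using assms by auto
next
  case False
  define s where "s = a + b"
  have s: "s > 0" using False assms s_def by auto
  have k: "z/s \<le> (z/s) powr q" if "0 \<le> z" "z \<le> s" for z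
    using powr_mono'[of q 1 "z/s"] that s assms by (simp add: powr_one)
  have "a powr q = s powr q * (a/s) powr q" using s by (simp add: powr_divide)
  moreover have "b powr q = s powr q * (b/s) powr q" using s by (simp add: powr_divide)
  moreover have "s powr q * (a/s) \<le> s powr q * (a/s) powr q"
    using k[of a] assms s_def by (intro mult_left_mono) auto
  moreover have "s powr q * (b/s) \<le> s powr q * (b/s) powr q"
    using k[of b] assms s_def by (intro mult_left_mono) auto
  ultimately have "a powr q + b powr q \<ge> s powr q * (a/s) + s powr q * (b/s)"
    by linarith
  also have "s powr q * (a/s) + s powr q * (b/s) = s powr q"
  proof -
    have "a/s + b/s = 1" using s s_def by (simp add: add_divide_distrib[symmetric])
    then show ?thesis by (metis distrib_left mult.right_neutral)
  qed
  finally show ?thesis using s_def by simp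
qed

lemma concave_half:
  fixes q X Y :: real
  assumes "0 < q" "q \<le> 1" "0 \<le> X" "0 \<le> Y"
  shows "(X powr q + Y powr q)/2 \<le> ((X+Y)/2) powr q"
proof -
  have "((X powr q + Y powr q)/2) powr (1/q) \<le> ((X powr q) powr (1/q) + (Y powr q) powr (1/q))/2"
    using assms by (intro conv_half) auto
  also have "\<dots> = (X + Y)/2" using assms by (simp add: powr_powr)
  finally have "(((X powr q + Y powr q)/2) powr (1/q)) powr q \<le> ((X+Y)/2) powr q"
    using assms by (intro powr_mono2) auto
  then show ?thesis using assms by (simp add: powr_powr)
qed

lemma cmod_sq_powr: "cmod z powr p = (cmod z ^ 2) powr (p/2)"
proof -
  have "cmod z ^ 2 = cmod z powr 2" by simp
  then have "(cmod z ^ 2) powr (p/2) = cmod z powr (2 * (p/2))" by (simp only: powr_powr)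
  then show ?thesis by simp
qed

lemma two_point_upper:
  fixes p :: real and u v :: complex
  assumes "1 \<le> p" "p \<le> 2"
  shows "(cmod (u+v) powr p + cmod (u-v) powr p)/2 \<le> cmod u powr p + cmod v powr p"
proof -
  define q where "q = p/2"
  have q: "0 < q" "q \<le> 1" using assms q_def by auto
  have par: "cmod (u+v)^2 + cmod (u-v)^2 = 2 * (cmod u ^2 + cmod v ^2)"
    unfolding cmod_power2 by (simp add: power2_eq_square algebra_simps)
  have "(cmod (u+v) powr p + cmod (u-v) powr p)/2 = ((cmod (u+v)^2) powr q + (cmod (u-v)^2) powr q)/2"
    by (simp add: q_def cmod_sq_powr[of _ p])
  also have "\<dots> \<le> ((cmod (u+v)^2 + cmod (u-v)^2)/2) powr q"
    using q by (intro concave_half) auto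
  also have "\<dots> = (cmod u ^2 + cmod v ^2) powr q"
  proof -
    have "(cmod (u+v)^2 + cmod (u-v)^2)/2 = cmod u^2 + cmod v^2" using par by simp
    then show ?thesis by (simp only:)
  qed
  also have "\<dots> \<le> (cmod u ^2) powr q + (cmod v ^2) powr q"
    using q by (intro subadd_powr) auto
  also have "\<dots> = cmod u powr p + cmod v powr p"
    by (simp add: q_def cmod_sq_powr[of _ p])
  finally show ?thesis .
qed

lemma two_point_lower:
  fixes p :: real and u v w :: complex
  assumes "1 \<le> p" "w = u \<or> w = v"
  shows "cmod w powr p \<le> (cmod (u+v) powr p + cmod (u-v) powr p)/2"
proof -
  have "cmod w \<le> (cmod (u+v) + cmod (u-v))/2"
  proof -
    have e1: "2 * u = (u+v) + (u-v)" and e2: "2 * v = (u+v) - (u-v)" by simp_all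
    have "cmod (2 * u) \<le> cmod (u+v) + cmod (u-v)" unfolding e1 by (rule norm_triangle_ineq)
    moreover have "cmod (2 * v) \<le> cmod (u+v) + cmod (u-v)" unfolding e2 by (rule norm_triangle_ineq4)
    ultimately show ?thesis using assms(2) by (auto simp: norm_mult)
  qed
  then have "cmod w powr p \<le> ((cmod (u+v) + cmod (u-v))/2) powr p"
    using assms by (intro powr_mono2) auto
  also have "\<dots> \<le> (cmod (u+v) powr p + cmod (u-v) powr p)/2"
    using assms by (intro conv_half) auto
  finally show ?thesis .
qed



fun rav :: "nat \<Rightarrow> ((nat \<Rightarrow> real) \<Rightarrow> real) \<Rightarrow> real" where
  "rav 0 F = F (\<lambda>_. 1)"
| "rav (Suc N) F = (rav N (\<lambda>e. F (e(N := 1))) + rav N (\<lambda>e. F (e(N := -1))))/2"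

definition sv :: "(nat \<Rightarrow> real) \<Rightarrow> bool" where "sv e \<longleftrightarrow> (\<forall>n. e n = 1 \<or> e n = -1)"

lemma sv_upd: "sv e \<Longrightarrow> c = 1 \<or> c = -1 \<Longrightarrow> sv (e(N := c))"
  by (auto simp: sv_def)

lemma rav_mono: "(\<And>e. sv e \<Longrightarrow> F e \<le> G e) \<Longrightarrow> rav N F \<le> rav N G"
proof (induction N arbitrary: F G)
  case 0 then show ?case by (simp add: sv_def)
next
  case (Suc N)
  have "rav N (\<lambda>e. F (e(N := 1))) \<le> rav N (\<lambda>e. G (e(N := 1)))"
    by (rule Suc.IH) (metis Suc.prems sv_upd)
  moreover have "rav N (\<lambda>e. F (e(N := -1))) \<le> rav N (\<lambda>e. G (e(N := -1)))"
    by (rule Suc.IH) (metis Suc.prems sv_upd)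
  ultimately show ?case by simp
qed

lemma rav_const: "rav N (\<lambda>_. c) = c"
  by (induction N arbitrary: c) auto

lemma rav_cmult: "rav N (\<lambda>e. c * F e) = c * rav N F"
  by (induction N arbitrary: F) (auto simp: algebra_simps)

lemma rav_integral:
  assumes "\<And>e. sv e \<Longrightarrow> integrable lebesgue (h e)"
  shows "integrable lebesgue (\<lambda>x. rav N (\<lambda>e. h e x)) \<and>
         (\<integral>x. rav N (\<lambda>e. h e x) \<partial>lebesgue) = rav N (\<lambda>e. \<integral>x. h e x \<partial>lebesgue)"
  using assms
proof (induction N arbitrary: h)
  case 0
  then show ?case by (simp add: sv_def)
next
  case (Suc N)
  have A: "integrable lebesgue (\<lambda>x. rav N (\<lambda>e. h (e(N := 1)) x)) \<and>
         (\<integral>x. rav N (\<lambda>e. h (e(N := 1)) x) \<partial>lebesgue) = rav N (\<lambda>e. \<integral>x. h (e(N := 1)) x \<partial>lebesgue)"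
    by (rule Suc.IH) (metis Suc.prems sv_upd)
  have B: "integrable lebesgue (\<lambda>x. rav N (\<lambda>e. h (e(N := -1)) x)) \<and>
         (\<integral>x. rav N (\<lambda>e. h (e(N := -1)) x) \<partial>lebesgue) = rav N (\<lambda>e. \<integral>x. h (e(N := -1)) x \<partial>lebesgue)"
    by (rule Suc.IH) (metis Suc.prems sv_upd)
  show ?case using A B by simp
qed

definition ssum :: "(nat \<Rightarrow> real) \<Rightarrow> (nat \<Rightarrow> complex) \<Rightarrow> nat \<Rightarrow> complex" where
  "ssum e g N = (\<Sum>n<N. complex_of_real (e n) * g n)"

lemma ssum_upd: "ssum (e(N := c)) g N = ssum e g N"
  unfolding ssum_def by (intro sum.cong) auto

lemma ssum_upd_Suc: "ssum (e(N := c)) g (Suc N) = ssum e g N + complex_of_real c * g N"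
proof -
  have "ssum (e(N := c)) g (Suc N) = ssum (e(N := c)) g N + complex_of_real ((e(N:=c)) N) * g N"
    unfolding ssum_def by (rule sum.lessThan_Suc)
  then show ?thesis by (simp add: ssum_upd)
qed

lemma rav_upper:
  assumes "1 \<le> p" "p \<le> 2"
  shows "rav N (\<lambda>e. cmod (c + ssum e g N) powr p) \<le> cmod c powr p + (\<Sum>n<N. cmod (g n) powr p)"
proof (induction N arbitrary: c)
  case 0 then show ?case by (simp add: ssum_def)
next
  case (Suc N)
  have "rav (Suc N) (\<lambda>e. cmod (c + ssum e g (Suc N)) powr p) =
    (rav N (\<lambda>e. cmod ((c + g N) + ssum e g N) powr p) + rav N (\<lambda>e. cmod ((c - g N) + ssum e g N) powr p))/2"
    by (simp add: ssum_upd_Suc algebra_simps)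
  also have "\<dots> \<le> ((cmod (c + g N) powr p + (\<Sum>n<N. cmod (g n) powr p)) + (cmod (c - g N) powr p + (\<Sum>n<N. cmod (g n) powr p)))/2"
    using Suc.IH[of "c + g N"] Suc.IH[of "c - g N"] by simp
  also have "\<dots> = (cmod (c + g N) powr p + cmod (c - g N) powr p)/2 + (\<Sum>n<N. cmod (g n) powr p)"
    by simp
  also have "\<dots> \<le> cmod c powr p + cmod (g N) powr p + (\<Sum>n<N. cmod (g n) powr p)"
    using two_point_upper[OF assms, of c "g N"] by simp
  finally show ?case by simp
qed

lemma rav_lower1:
  assumes "1 \<le> p"
  shows "cmod c powr p \<le> rav N (\<lambda>e. cmod (c + ssum e g N) powr p)"
proof (induction N arbitrary: c)
  case 0 then show ?case by (simp add: ssum_def)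
next
  case (Suc N)
  have "rav (Suc N) (\<lambda>e. cmod (c + ssum e g (Suc N)) powr p) =
    (rav N (\<lambda>e. cmod ((c + g N) + ssum e g N) powr p) + rav N (\<lambda>e. cmod ((c - g N) + ssum e g N) powr p))/2"
    by (simp add: ssum_upd_Suc algebra_simps)
  also have "\<dots> \<ge> (cmod (c + g N) powr p + cmod (c - g N) powr p)/2"
    using Suc.IH[of "c + g N"] Suc.IH[of "c - g N"] by simp
  finally show ?case using two_point_lower[OF assms, of c c "g N"] by simp
qed

lemma rav_lower2:
  assumes "1 \<le> p" "j < N"
  shows "cmod (g j) powr p \<le> rav N (\<lambda>e. cmod (c + ssum e g N) powr p)"
  using assms(2)
proof (induction N arbitrary: c)
  case 0 then show ?case by simp
next
  case (Suc N)
  have eq: "rav (Suc N) (\<lambda>e. cmod (c + ssum e g (Suc N)) powr p) =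
    (rav N (\<lambda>e. cmod ((c + g N) + ssum e g N) powr p) + rav N (\<lambda>e. cmod ((c - g N) + ssum e g N) powr p))/2"
    by (simp add: ssum_upd_Suc algebra_simps)
  show ?case
  proof (cases "j = N")
    case True
    have "rav N (\<lambda>e. cmod ((c + g N) + ssum e g N) powr p) + rav N (\<lambda>e. cmod ((c - g N) + ssum e g N) powr p)
       \<ge> cmod (c + g N) powr p + cmod (c - g N) powr p"
      using rav_lower1[OF assms(1), of "c + g N" N g] rav_lower1[OF assms(1), of "c - g N" N g] by simp
    then show ?thesis unfolding eq using two_point_lower[OF assms(1), of "g N" c "g N"] True
      by (simp add: add.commute)
  next
    case False
    then have "j < N" using Suc.prems by simp
    then show ?thesis unfolding eq using Suc.IH[of "c + g N"] Suc.IH[of "c - g N"] by simp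
  qed
qed



lemma meas_pow: "g \<in> borel_measurable lebesgue \<Longrightarrow> (\<lambda>x. cmod (g x) powr p) \<in> borel_measurable lebesgue"
  by measurable

lemma memLp_add:
  assumes "1 \<le> p" "memLp p g" "memLp p h"
  shows "memLp p (\<lambda>x. g x + h x)"
proof -
  have mg: "g \<in> borel_measurable lebesgue" and mh: "h \<in> borel_measurable lebesgue"
    and ig: "integrable lebesgue (\<lambda>x. cmod (g x) powr p)"
    and ih: "integrable lebesgue (\<lambda>x. cmod (h x) powr p)"
    using assms by (auto simp: memLp_def)
  have m: "(\<lambda>x. g x + h x) \<in> borel_measurable lebesgue" using mg mh by measurable
  have bnd: "cmod (g x + h x) powr p \<le> 2 powr p * (cmod (g x) powr p + cmod (h x) powr p)" for x
  proof -
    have "cmod (g x + h x) powr p \<le> (cmod (g x) + cmod (h x)) powr p"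
      using assms(1) by (intro powr_mono2) (auto intro: norm_triangle_ineq)
    also have "\<dots> = 2 powr p * ((cmod (g x) + cmod (h x))/2) powr p"
      by (simp add: powr_divide)
    also have "\<dots> \<le> 2 powr p * ((cmod (g x) powr p + cmod (h x) powr p)/2)"
      using assms(1) by (intro mult_left_mono conv_half) auto
    also have "\<dots> \<le> 2 powr p * (cmod (g x) powr p + cmod (h x) powr p)"
      by (intro mult_left_mono) auto
    finally show ?thesis .
  qed
  have i2: "integrable lebesgue (\<lambda>x. 2 powr p * (cmod (g x) powr p + cmod (h x) powr p))"
    using ig ih by simp
  have "integrable lebesgue (\<lambda>x. cmod (g x + h x) powr p)"
    apply (rule Bochner_Integration.integrable_bound[OF i2])
    subgoal using meas_pow[OF m] by simp
    subgoal using bnd by (auto intro!: AE_I2)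
    done
  then show ?thesis using m by (simp add: memLp_def)
qed

lemma memLp_cmult:
  assumes "memLp p g"
  shows "memLp p (\<lambda>x. c * g x)"
proof -
  have mg: "g \<in> borel_measurable lebesgue"
    and ig: "integrable lebesgue (\<lambda>x. cmod (g x) powr p)"
    using assms by (auto simp: memLp_def)
  have "integrable lebesgue (\<lambda>x. cmod c powr p * cmod (g x) powr p)" using ig by simp
  then have "integrable lebesgue (\<lambda>x. cmod (c * g x) powr p)" by (simp add: norm_mult powr_mult)
  moreover have "(\<lambda>x. c * g x) \<in> borel_measurable lebesgue" using mg by measurable
  ultimately show ?thesis by (simp add: memLp_def)
qed

lemma memLp_sum:
  fixes N :: nat
  assumes "1 \<le> p" "\<And>n. n < N \<Longrightarrow> memLp p (h n)"
  shows "memLp p (\<lambda>x. \<Sum>n<N. h n x)"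
  using assms(2)
proof (induction N)
  case 0 then show ?case using assms(1) by (simp add: memLp_def)
next
  case (Suc N)
  have "memLp p (\<lambda>x. (\<Sum>n<N. h n x) + h N x)"
    using Suc by (intro memLp_add assms(1)) auto
  then show ?case by simp
qed

definition Ip :: "real \<Rightarrow> (real \<Rightarrow> complex) \<Rightarrow> real" where
  "Ip p g = (\<integral>x. cmod (g x) powr p \<partial>lebesgue)"

lemma Ip_nonneg: "0 \<le> Ip p g"
  unfolding Ip_def by (rule integral_nonneg_AE) auto

lemma Lp_norm_Ip: "Lp_norm p g = Ip p g powr (1/p)"
  by (simp add: Lp_norm_def Ip_def)

lemma Lp_norm_pow: "p > 0 \<Longrightarrow> Lp_norm p g powr p = Ip p g"
  using Ip_nonneg[of p g] by (simp add: Lp_norm_Ip powr_powr)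

lemma Lp_le_to_Ip:
  assumes "p > 0" "0 \<le> K" "Lp_norm p g \<le> K * Lp_norm p h"
  shows "Ip p g \<le> K powr p * Ip p h"
proof -
  have "Lp_norm p g powr p \<le> (K * Lp_norm p h) powr p"
    using assms by (intro powr_mono2) (auto simp: Lp_norm_Ip)
  then show ?thesis using assms by (simp add: powr_mult Lp_norm_pow)
qed

lemma Ip_le_to_Lp:
  assumes "p > 0" "0 \<le> c" "0 \<le> T" "c * T \<le> Ip p g"
  shows "c powr (1/p) * T powr (1/p) \<le> Lp_norm p g"
proof -
  have "(c * T) powr (1/p) \<le> Ip p g powr (1/p)"
    using assms by (intro powr_mono2) auto
  then show ?thesis by (simp add: powr_mult Lp_norm_Ip)
qed

lemma Ip_le_to_Lp2:
  assumes "p > 0" "0 \<le> c" "0 \<le> T" "Ip p g \<le> c * T"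
  shows "Lp_norm p g \<le> c powr (1/p) * T powr (1/p)"
proof -
  have "Ip p g powr (1/p) \<le> (c * T) powr (1/p)"
    using assms Ip_nonneg by (intro powr_mono2) auto
  then show ?thesis by (simp add: powr_mult Lp_norm_Ip)
qed

lemma cmod_ind_powr: "p > 0 \<Longrightarrow> cmod (indicator A x *\<^sub>R z) powr p = indicator A x * cmod z powr p"
  by (cases "x \<in> A") auto



lemma main_bounds:
  fixes p K C M \<delta> :: real and f :: "nat \<Rightarrow> real \<Rightarrow> complex" and E :: "nat \<Rightarrow> real set"
    and a :: "nat \<Rightarrow> complex" and N :: nat
  assumes p1: "1 \<le> p" and p2: "p \<le> 2" and d0: "\<delta> > 0"
    and H1: "K_unconditional_basic p K f" and H2: "\<forall>n. Lp_norm p (f n) \<le> C"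
    and H3: "\<forall>n. E n \<in> sets lebesgue"
    and H4: "AE x in lebesgue. \<forall>N. (\<Sum>n<N. indicator (E n) x) \<le> M"
    and H5: "\<forall>n. Lp_norm p (\<lambda>x. indicator (E n) x *\<^sub>R f n x) \<ge> \<delta>"
  shows "(\<delta> powr p / (max M 1 * (max K 1) powr p)) powr (1/p) * (\<Sum>n<N. cmod (a n) powr p) powr (1 / p)
           \<le> Lp_norm p (\<lambda>x. \<Sum>n<N. a n * f n x) \<and>
         Lp_norm p (\<lambda>x. \<Sum>n<N. a n * f n x)
           \<le> ((max K 1) powr p * (max C 1) powr p) powr (1/p) * (\<Sum>n<N. cmod (a n) powr p) powr (1 / p)"
proof -
  have p0: "p > 0" using p1 by simp
  have memf: "\<And>n. memLp p (f n)" using H1 by (simp add: K_unconditional_basic_def basic_seq_def)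
  have unc: "\<And>a \<theta> N. (\<forall>n. cmod (\<theta> n) \<le> 1) \<Longrightarrow> Lp_norm p (\<lambda>x. \<Sum>n<N. \<theta> n * a n * f n x)
          \<le> K * Lp_norm p (\<lambda>x. \<Sum>n<N. a n * f n x)"
    using H1 by (simp add: K_unconditional_basic_def)
  have intf: "integrable lebesgue (\<lambda>x. cmod (f n x) powr p)" for n
    using memf[of n] by (simp add: memLp_def)
  have intr: "integrable lebesgue (\<lambda>x. indicator (E n) x * cmod (f n x) powr p)" for n
    using integrable_mult_indicator[OF H3[rule_format, of n] intf[of n]] by simp
  have Ip_restr: "Ip p (\<lambda>x. indicator (E n) x *\<^sub>R f n x) = (\<integral>x. indicator (E n) x * cmod (f n x) powr p \<partial>lebesgue)" for n
    unfolding Ip_def by (simp only: cmod_ind_powr[OF p0])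
  have restr_le: "Ip p (\<lambda>x. indicator (E n) x *\<^sub>R f n x) \<le> Ip p (f n)" for n
    unfolding Ip_restr unfolding Ip_def
    by (rule integral_mono[OF intr intf]) (auto simp: indicator_def)
  have L0: "\<delta> \<le> Lp_norm p (f 0)"
  proof -
    have "Lp_norm p (\<lambda>x. indicator (E 0) x *\<^sub>R f 0 x) \<le> Lp_norm p (f 0)"
      unfolding Lp_norm_Ip using restr_le[of 0] p0 Ip_nonneg by (intro powr_mono2) auto
    then show ?thesis using H5 by (meson order_trans)
  qed
  have "Lp_norm p (f 0) \<le> K * Lp_norm p (f 0)"
    using unc[of "\<lambda>_. 1" "\<lambda>_. 1" 1] by simp
  then have K1: "K \<ge> 1" using L0 d0
    by (metis less_le_trans mult_le_cancel_right1)
  then have KK: "max K 1 = K" by simp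
  have CC: "C \<le> max C 1" by simp
  have C0: "C > 0" using L0 d0 H2 by (meson less_le_trans)
  define S where "S = (\<lambda>x. \<Sum>n<N. a n * f n x)"
  define Se where "Se = (\<lambda>e x. \<Sum>n<N. complex_of_real (e n) * a n * f n x)"
  define T where "T = (\<Sum>n<N. cmod (a n) powr p)"
  have T0: "T \<ge> 0" unfolding T_def by (intro sum_nonneg) auto
  have memS: "memLp p S" unfolding S_def by (intro memLp_sum p1 memLp_cmult memf)
  have memSe: "memLp p (Se e)" for e unfolding Se_def by (intro memLp_sum p1 memLp_cmult memf)
  have intSe: "integrable lebesgue (\<lambda>x. cmod (Se e x) powr p)" for e
    using memSe[of e] by (simp add: memLp_def)
  have Se_ssum: "Se e x = 0 + ssum e (\<lambda>n. a n * f n x) N" for e x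
    by (simp add: Se_def ssum_def mult.assoc)
  have U1: "Ip p (Se e) \<le> K powr p * Ip p S" if "sv e" for e
  proof (rule Lp_le_to_Ip[OF p0])
    show "0 \<le> K" using K1 by simp
    have "\<forall>n. cmod (complex_of_real (e n)) \<le> 1"
    proof
      fix n
      from that have "e n = 1 \<or> e n = -1" by (simp add: sv_def)
      then show "cmod (complex_of_real (e n)) \<le> 1" by auto
    qed
    from unc[OF this, of a N] show "Lp_norm p (Se e) \<le> K * Lp_norm p S"
      by (simp add: Se_def S_def)
  qed
  have U2: "Ip p S \<le> K powr p * Ip p (Se e)" if "sv e" for e
  proof (rule Lp_le_to_Ip[OF p0])
    show "0 \<le> K" using K1 by simp
    have "\<forall>n. cmod (complex_of_real (e n)) \<le> 1"
    proof
      fix n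
      from that have "e n = 1 \<or> e n = -1" by (simp add: sv_def)
      then show "cmod (complex_of_real (e n)) \<le> 1" by auto
    qed
    from unc[OF this, of "\<lambda>n. complex_of_real (e n) * a n" N]
    have "Lp_norm p (\<lambda>x. \<Sum>n<N. complex_of_real (e n) * (complex_of_real (e n) * a n) * f n x)
       \<le> K * Lp_norm p (Se e)" by (simp add: Se_def)
    moreover have "(\<lambda>x. \<Sum>n<N. complex_of_real (e n) * (complex_of_real (e n) * a n) * f n x) = S"
    proof
      fix x
      have "complex_of_real (e n) * (complex_of_real (e n) * a n) = a n" for n
        using that unfolding sv_def by (metis mult.left_neutral mult_minus_left minus_minus of_real_1 of_real_minus)
      then show "(\<Sum>n<N. complex_of_real (e n) * (complex_of_real (e n) * a n) * f n x) = S x"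
        unfolding S_def by (intro sum.cong) (simp_all only:)
    qed
    ultimately show "Lp_norm p S \<le> K * Lp_norm p (Se e)" by simp
  qed
  have RI: "integrable lebesgue (\<lambda>x. rav N (\<lambda>e. cmod (Se e x) powr p)) \<and>
      (\<integral>x. rav N (\<lambda>e. cmod (Se e x) powr p) \<partial>lebesgue) = rav N (\<lambda>e. Ip p (Se e))"
    unfolding Ip_def by (rule rav_integral) (rule intSe)
  have intsum: "integrable lebesgue (\<lambda>x. \<Sum>n<N. cmod (a n) powr p * cmod (f n x) powr p)"
    using intf by auto
  have "Ip p S = rav N (\<lambda>e. Ip p S)" by (simp add: rav_const)
  also have "\<dots> \<le> rav N (\<lambda>e. K powr p * Ip p (Se e))" by (rule rav_mono) (rule U2)
  also have "\<dots> = K powr p * (\<integral>x. rav N (\<lambda>e. cmod (Se e x) powr p) \<partial>lebesgue)"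
    using RI by (simp add: rav_cmult)
  also have "\<dots> \<le> K powr p * (\<integral>x. (\<Sum>n<N. cmod (a n) powr p * cmod (f n x) powr p) \<partial>lebesgue)"
  proof (intro mult_left_mono integral_mono)
    show "integrable lebesgue (\<lambda>x. rav N (\<lambda>e. cmod (Se e x) powr p))" using RI by simp
    show "integrable lebesgue (\<lambda>x. \<Sum>n<N. cmod (a n) powr p * cmod (f n x) powr p)" by (rule intsum)
    fix x
    have "rav N (\<lambda>e. cmod (Se e x) powr p) \<le> cmod 0 powr p + (\<Sum>n<N. cmod (a n * f n x) powr p)"
      unfolding Se_ssum by (rule rav_upper[OF p1 p2])
    then show "rav N (\<lambda>e. cmod (Se e x) powr p) \<le> (\<Sum>n<N. cmod (a n) powr p * cmod (f n x) powr p)"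
      by (simp add: norm_mult powr_mult)
  qed simp
  also have "\<dots> = K powr p * (\<Sum>n<N. cmod (a n) powr p * Ip p (f n))"
    using intf by (simp add: Ip_def)
  also have "\<dots> \<le> K powr p * (\<Sum>n<N. cmod (a n) powr p * (max C 1) powr p)"
  proof -
    have "Ip p (f n) \<le> (max C 1) powr p" for n
    proof -
      have "Ip p (f n) = Lp_norm p (f n) powr p" using p0 by (simp add: Lp_norm_pow)
      also have "\<dots> \<le> (max C 1) powr p"
        using H2 p0 by (intro powr_mono2) (auto simp: Lp_norm_Ip intro: order_trans[OF _ CC])
      finally show ?thesis .
    qed
    then show ?thesis by (intro mult_left_mono sum_mono) auto
  qed
  also have "\<dots> = (K powr p * (max C 1) powr p) * T"
    by (simp add: T_def sum_distrib_left sum_distrib_right mult_ac)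
  finally have upper: "Ip p S \<le> (K powr p * (max C 1) powr p) * T" .
  have "(\<delta> powr p) * T = (\<Sum>n<N. cmod (a n) powr p * \<delta> powr p)"
    by (simp add: T_def sum_distrib_left mult_ac)
  also have "\<dots> \<le> (\<Sum>n<N. cmod (a n) powr p * Ip p (\<lambda>x. indicator (E n) x *\<^sub>R f n x))"
  proof (intro sum_mono mult_left_mono)
    fix n
    have "\<delta> powr p \<le> Lp_norm p (\<lambda>x. indicator (E n) x *\<^sub>R f n x) powr p"
      using H5 d0 p0 by (intro powr_mono2) auto
    then show "\<delta> powr p \<le> Ip p (\<lambda>x. indicator (E n) x *\<^sub>R f n x)" using p0 by (simp add: Lp_norm_pow)
  qed simp
  also have "\<dots> = (\<integral>x. (\<Sum>n<N. indicator (E n) x * cmod (a n * f n x) powr p) \<partial>lebesgue)"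
  proof -
    have "(\<integral>x. (\<Sum>n<N. indicator (E n) x * cmod (a n * f n x) powr p) \<partial>lebesgue)
       = (\<integral>x. (\<Sum>n<N. cmod (a n) powr p * (indicator (E n) x * cmod (f n x) powr p)) \<partial>lebesgue)"
      by (simp add: norm_mult powr_mult mult_ac)
    also have "\<dots> = (\<Sum>n<N. cmod (a n) powr p * (\<integral>x. indicator (E n) x * cmod (f n x) powr p \<partial>lebesgue))"
      using intr by simp
    finally show ?thesis by (simp add: Ip_restr)
  qed
  also have "\<dots> \<le> (\<integral>x. max M 1 * rav N (\<lambda>e. cmod (Se e x) powr p) \<partial>lebesgue)"
  proof (rule integral_mono_AE)
    show "integrable lebesgue (\<lambda>x. \<Sum>n<N. indicator (E n) x * cmod (a n * f n x) powr p)"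
    proof -
      have "integrable lebesgue (\<lambda>x. \<Sum>n<N. cmod (a n) powr p * (indicator (E n) x * cmod (f n x) powr p))"
        by (rule Bochner_Integration.integrable_sum, rule Bochner_Integration.integrable_mult_right, rule intr)
      then show ?thesis by (simp only: norm_mult powr_mult mult_ac)
    qed
    show "integrable lebesgue (\<lambda>x. max M 1 * rav N (\<lambda>e. cmod (Se e x) powr p))"
      using RI by simp
    show "AE x in lebesgue. (\<Sum>n<N. indicator (E n) x * cmod (a n * f n x) powr p)
        \<le> max M 1 * rav N (\<lambda>e. cmod (Se e x) powr p)"
      using H4
    proof (rule eventually_mono)
      fix x assume hx: "\<forall>N. (\<Sum>n<N. indicator (E n) x) \<le> M"
      define R where "R = rav N (\<lambda>e. cmod (Se e x) powr p)"
      have R0: "0 \<le> R"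
        using rav_lower1[OF p1, of 0 N "\<lambda>n. a n * f n x"] unfolding R_def Se_ssum by simp
      have "(\<Sum>n<N. indicator (E n) x * cmod (a n * f n x) powr p) \<le> (\<Sum>n<N. indicator (E n) x * R)"
      proof (intro sum_mono mult_left_mono)
        fix n assume "n \<in> {..<N}"
        then show "cmod (a n * f n x) powr p \<le> R"
          using rav_lower2[OF p1, of n N "\<lambda>n. a n * f n x" 0] unfolding R_def Se_ssum by simp
      qed simp
      also have "\<dots> = (\<Sum>n<N. indicator (E n) x) * R" by (simp add: sum_distrib_right)
      also have "\<dots> \<le> max M 1 * R"
        using hx R0 by (intro mult_right_mono) (auto intro: order_trans[OF _ max.cobounded1])
      finally show "(\<Sum>n<N. indicator (E n) x * cmod (a n * f n x) powr p) \<le> max M 1 * R" .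
    qed
  qed
  also have "\<dots> = max M 1 * rav N (\<lambda>e. Ip p (Se e))" using RI by simp
  also have "\<dots> \<le> max M 1 * rav N (\<lambda>e. K powr p * Ip p S)"
    by (intro mult_left_mono rav_mono U1) auto
  also have "\<dots> = max M 1 * K powr p * Ip p S" by (simp add: rav_const)
  finally have low: "\<delta> powr p * T \<le> max M 1 * K powr p * Ip p S" .
  have pos: "max M 1 * K powr p > 0" using K1 by simp
  have lower: "(\<delta> powr p / (max M 1 * K powr p)) * T \<le> Ip p S"
    using low pos by (simp add: field_simps)
  have "(\<delta> powr p / (max M 1 * K powr p)) powr (1/p) * T powr (1/p) \<le> Lp_norm p S"
    by (rule Ip_le_to_Lp[OF p0 _ T0 lower]) (use pos in simp)
  moreover have "Lp_norm p S \<le> (K powr p * (max C 1) powr p) powr (1/p) * T powr (1/p)"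
    by (rule Ip_le_to_Lp2[OF p0 _ T0 upper]) simp
  ultimately show ?thesis unfolding KK S_def T_def by simp
qed


theorem lemma3p5:
  fixes p K C M \<delta> :: real
  assumes "1 \<le> p" and "p \<le> 2" and "\<delta> > 0"
  shows "\<exists>A B. A > 0 \<and> B > 0 \<and>
    (\<forall>(f :: nat \<Rightarrow> real \<Rightarrow> complex) (E :: nat \<Rightarrow> real set).
      K_unconditional_basic p K f \<and>
      (\<forall>n. Lp_norm p (f n) \<le> C) \<and>
      (\<forall>n. E n \<in> sets lebesgue) \<and>
      (AE x in lebesgue. \<forall>N. (\<Sum>n<N. indicator (E n) x) \<le> M) \<and>
      (\<forall>n. Lp_norm p (\<lambda>x. indicator (E n) x *\<^sub>R f n x) \<ge> \<delta>)
      \<longrightarrow>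
      (\<forall>(a :: nat \<Rightarrow> complex) N.
         A * (\<Sum>n<N. cmod (a n) powr p) powr (1 / p)
           \<le> Lp_norm p (\<lambda>x. \<Sum>n<N. a n * f n x) \<and>
         Lp_norm p (\<lambda>x. \<Sum>n<N. a n * f n x)
           \<le> B * (\<Sum>n<N. cmod (a n) powr p) powr (1 / p)))"
  proof (rule exI[of _ "(\<delta> powr p / (max M 1 * (max K 1) powr p)) powr (1/p)"],
       rule exI[of _ "((max K 1) powr p * (max C 1) powr p) powr (1/p)"], intro conjI allI impI)
  show "0 < (\<delta> powr p / (max M 1 * (max K 1) powr p)) powr (1/p)" using assms by (auto simp: max_def)
  have "max K 1 > 0" "max C 1 > 0" by (simp_all add: less_max_iff_disj)
  then show "0 < ((max K 1) powr p * (max C 1) powr p) powr (1/p)" by simp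
next
  fix f E a N
  assume "K_unconditional_basic p K f \<and> (\<forall>n. Lp_norm p (f n) \<le> C) \<and> (\<forall>n. E n \<in> sets lebesgue) \<and>
      (AE x in lebesgue. \<forall>N. (\<Sum>n<N. indicator (E n) x) \<le> M) \<and>
      (\<forall>n. Lp_norm p (\<lambda>x. indicator (E n) x *\<^sub>R f n x) \<ge> \<delta>)"
  then show "(\<delta> powr p / (max M 1 * (max K 1) powr p)) powr (1/p) * (\<Sum>n<N. cmod (a n) powr p) powr (1 / p)
           \<le> Lp_norm p (\<lambda>x. \<Sum>n<N. a n * f n x)"
    using main_bounds[OF assms, where K=K and C=C and M=M and f=f and E=E and a=a and N=N] by blast
next
  fix f E a N
  assume "K_unconditional_basic p K f \<and> (\<forall>n. Lp_norm p (f n) \<le> C) \<and> (\<forall>n. E n \<in> sets lebesgue) \<and>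
      (AE x in lebesgue. \<forall>N. (\<Sum>n<N. indicator (E n) x) \<le> M) \<and>
      (\<forall>n. Lp_norm p (\<lambda>x. indicator (E n) x *\<^sub>R f n x) \<ge> \<delta>)"
  then show "Lp_norm p (\<lambda>x. \<Sum>n<N. a n * f n x)
           \<le> ((max K 1) powr p * (max C 1) powr p) powr (1/p) * (\<Sum>n<N. cmod (a n) powr p) powr (1 / p)"
    using main_bounds[OF assms, where K=K and C=C and M=M and f=f and E=E and a=a and N=N] by blast
qed

end
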